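(* For every $0<\epsilon<1$ and every integer $m\ge2$ there exists a scheduling game on $m$ identical machines of speed $1$ with (machine-dependent) priority lists, in which every job has negative deterioration $p_i(t)=\max\{\tau_i,b_i-a_it\}$ with $0\le a_i\le 1$, having a pure Nash equilibrium $\sigma$ with $C_{\max}(\sigma)\ge\left(3-\frac1m-\epsilon\right)OPT(G)$. Hence the bound $3-\frac1m$ on the price of anarchy of this class is tight.
   Context: Scheduling game: a finite set $N$ of $n$ jobs (players) and a set $M$ of $m$ machines. Machine $j$ has speed $s_j>0$ and a priority list $\pi_j$, a bijection $N\to\{1,\dots,n\}$; job $u$ has higher priority than $v$ on $j$ iff $\pi_j(u)<\pi_j(v)$. Negative deterioration: $p_i(t)=\max\{\tau_i,b_i-a_it\}$ with $b_i,a_i\ge0$, $\tau_i>0$ ($a_i=0$ gives a fixed-length job). A profile $\sigma\in M^N$ assigns each job to a machine. On machine $j$, the jobs assigned to it, listed in increasing $\pi_j$-order as $i_1,i_2,\dots$, are processed without idle time: $S_{i_1}(\sigma)=0$, $C_{i_k}(\sigma)=S_{i_k}(\sigma)+p_{i_k}(S_{i_k}(\sigma))/s_j$, $S_{i_{k+1}}(\sigma)=C_{i_k}(\sigma)$. The cost of job $i$ is $C_i(\sigma)$. A pure Nash equilibrium (NE) is a profile in which no job can strictly decrease its completion time by unilaterally changing its machine. Makespan $C_{\max}(\sigma)=\max_iC_i(\sigma)$; $OPT(G)=\min_\sigma C_{\max}(\sigma)$ over all profiles. *)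

theory Defs
  imports Complex_Main
begin

text \<open>Machine j has speed sp j and priority
  list pri j (job u before v on j iff pri j u < pri j v).\<close>

record game =
  njobs :: nat
  nmach :: nat
  sp    :: "nat \<Rightarrow> real"
  pri   :: "nat \<Rightarrow> nat \<Rightarrow> nat"
  da    :: "nat \<Rightarrow> real"
  db    :: "nat \<Rightarrow> real"
  tau   :: "nat \<Rightarrow> real"

definition valid_game :: "game \<Rightarrow> bool" where
  "valid_game G \<longleftrightarrow>
     njobs G \<ge> 1 \<and> nmach G \<ge> 1 \<and>
     (\<forall>j<nmach G. sp G j > 0 \<and> bij_betw (pri G j) {0..<njobs G} {1..njobs G}) \<and>
     (\<forall>i<njobs G. da G i \<ge> 0 \<and> db G i \<ge> 0 \<and> tau G i > 0)"

definition ptime :: "game \<Rightarrow> nat \<Rightarrow> real \<Rightarrow> real" where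
  "ptime G i t = max (tau G i) (db G i - da G i * t)"

fun run :: "game \<Rightarrow> real \<Rightarrow> nat list \<Rightarrow> real \<Rightarrow> real" where
  "run G s [] t = t"
| "run G s (i # is) t = run G s is (t + ptime G i t / s)"

definition profiles :: "game \<Rightarrow> (nat \<Rightarrow> nat) set" where
  "profiles G = {\<sigma>. (\<forall>i<njobs G. \<sigma> i < nmach G) \<and> (\<forall>i\<ge>njobs G. \<sigma> i = 0)}"

definition compl :: "game \<Rightarrow> (nat \<Rightarrow> nat) \<Rightarrow> nat \<Rightarrow> real" where
  "compl G \<sigma> i =
     (let j = \<sigma> i in
      run G (sp G j)
        (sort_key (pri G j) (filter (\<lambda>k. \<sigma> k = j \<and> pri G j k \<le> pri G j i) [0..<njobs G])) 0)"

definition makespan :: "game \<Rightarrow> (nat \<Rightarrow> nat) \<Rightarrow> real" where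
  "makespan G \<sigma> = Max ((compl G \<sigma>) ` {0..<njobs G})"

definition OPT :: "game \<Rightarrow> real" where
  "OPT G = Min (makespan G ` profiles G)"

definition is_NE :: "game \<Rightarrow> (nat \<Rightarrow> nat) \<Rightarrow> bool" where
  "is_NE G \<sigma> \<longleftrightarrow> \<sigma> \<in> profiles G \<and>
     (\<forall>i<njobs G. \<forall>j<nmach G. compl G \<sigma> i \<le> compl G (\<sigma>(i := j)) i)"

end

theory Submission
  imports Defs "HOL-Library.Multiset" "HOL-Library.FuncSet"
begin


fun pos :: "nat list \<Rightarrow> nat \<Rightarrow> nat" where
  "pos [] x = 0"
| "pos (y # ys) x = (if y = x then 0 else Suc (pos ys x))"

lemma pos_append: "x \<notin> set A \<Longrightarrow> pos (A @ B) x = length A + pos B x"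
  by (induct A) auto

lemma pos_less: "x \<in> set A \<Longrightarrow> pos A x < length A"
  by (induct A) auto

lemma nth_pos: "x \<in> set A \<Longrightarrow> A ! pos A x = x"
  by (induct A) auto

lemma pos_nth: "distinct A \<Longrightarrow> i < length A \<Longrightarrow> pos A (A ! i) = i"
proof (induct A arbitrary: i)
  case Nil then show ?case by simp
next
  case (Cons a A) then show ?case
    by (cases i) (auto simp: nth_mem)
qed

lemma pos_upt: "a \<le> x \<Longrightarrow> x < b \<Longrightarrow> pos [a..<b] x = x - a"
  using pos_nth[of "[a..<b]" "x - a"] by simp

lemma filter_pos_take:
  "distinct L \<Longrightarrow> filter (\<lambda>x. P x \<and> pos L x \<le> c) L = filter P (take (Suc c) L)"
proof (induct L arbitrary: c)
  case Nil then show ?case by simp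
next
  case (Cons a L)
  have e: "filter (\<lambda>x. P x \<and> pos (a # L) x \<le> c) L = filter (\<lambda>x. P x \<and> Suc (pos L x) \<le> c) L"
    using Cons.prems by (intro filter_cong) auto
  show ?case
  proof (cases c)
    case 0 then show ?thesis using e by (simp add: filter_False)
  next
    case (Suc c') then show ?thesis using e Cons by simp
  qed
qed

lemma sort_pos:
  assumes "distinct L" "set L = {0..<n}"
  shows "sort_key (\<lambda>x. pos L x + 1) (filter Q [0..<n]) = filter Q L"
proof (rule sort_key_inj_key_eq)
  have "mset L = mset [0..<n]"
    using assms set_eq_iff_mset_eq_distinct[of L "[0..<n]"] by simp
  then show "mset (filter Q [0..<n]) = mset (filter Q L)" by (metis mset_filter)
  show "inj_on (\<lambda>x. pos L x + 1) (set (filter Q [0..<n]))"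
    by (rule inj_onI) (metis assms(2) atLeastLessThan_iff add_right_cancel mem_Collect_eq
          nth_pos set_filter set_upt)
  have "map (\<lambda>x. pos L x) L = [0..<length L]"
    using assms(1) by (intro nth_equalityI) (auto simp: pos_nth)
  then have "sorted (map (\<lambda>x. pos L x + 1) L)"
  proof -
    have "map (\<lambda>x. pos L x + 1) L = map Suc (map (\<lambda>x. pos L x) L)" by simp
    also have "\<dots> = [1..<Suc (length L)]" using \<open>map (\<lambda>x. pos L x) L = [0..<length L]\<close>
      by (simp add: map_Suc_upt)
    finally show ?thesis by (simp only: sorted_upt)
  qed
  then show "sorted (map (\<lambda>x. pos L x + 1) (filter Q L))" by (rule sorted_filter)
qed

lemma bij_pos:
  assumes "distinct L" "set L = {0..<n}"
  shows "bij_betw (\<lambda>x. pos L x + 1) {0..<n} {1..n}"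
proof -
  have len: "length L = n" using assms distinct_card by fastforce
  show ?thesis
  proof (rule bij_betw_byWitness[where f' = "\<lambda>p. L ! (p - 1)"])
    show "\<forall>a\<in>{0..<n}. L ! (pos L a + 1 - 1) = a" using assms by (simp add: nth_pos)
    show "\<forall>a'\<in>{1..n}. pos L (L ! (a' - 1)) + 1 = a'" using assms len by (auto simp: pos_nth)
    show "(\<lambda>x. pos L x + 1) ` {0..<n} \<subseteq> {1..n}" using assms len pos_less
      by (auto simp: Suc_le_eq)
    show "(\<lambda>p. L ! (p - 1)) ` {1..n} \<subseteq> {0..<n}"
    proof
      fix y assume "y \<in> (\<lambda>p. L ! (p - 1)) ` {1..n}"
      then obtain p where p: "p \<in> {1..n}" "y = L ! (p - 1)" by blast
      then have "p - 1 < length L" using len by auto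
      then have "y \<in> set L" using p nth_mem by metis
      then show "y \<in> {0..<n}" using assms by simp
    qed
  qed
qed

lemma run_append: "run G s (xs @ ys) t = run G s ys (run G s xs t)"
  by (induct xs arbitrary: t) auto



definition NN :: "nat \<Rightarrow> nat" where "NN d = d + 2 + Suc d * d"

definition Lj :: "nat \<Rightarrow> nat \<Rightarrow> nat list" where
  "Lj d j = j # [d+2+j*d ..< d+2+j*d+d] @ Suc d # [d+2 ..< d+2+j*d] @ [d+2+j*d+d ..< NN d]
      @ [0..<j] @ [Suc j..<Suc d]"

lemma set_aux:
  fixes A B j d :: nat
  assumes "A + d \<le> B" "j \<le> d"
  shows "insert j ({d+2+A ..< d+2+A+d} \<union> insert (Suc d) ({d+2 ..< d+2+A} \<union> {d+2+A+d ..< d+2+B}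
      \<union> {0..<j} \<union> {Suc j..<Suc d})) = {0..<d+2+B}"
proof (rule set_eqI)
  fix x show "x \<in> insert j ({d+2+A ..< d+2+A+d} \<union> insert (Suc d) ({d+2 ..< d+2+A} \<union> {d+2+A+d ..< d+2+B}
      \<union> {0..<j} \<union> {Suc j..<Suc d})) \<longleftrightarrow> x \<in> {0..<d+2+B}"
    using assms by (simp only: insert_iff Un_iff atLeastLessThan_iff) linarith
qed

lemma dist_aux:
  fixes A B j d :: nat
  assumes "A + d \<le> B" "j \<le> d"
  shows "distinct (j # [d+2+A ..< d+2+A+d] @ Suc d # [d+2 ..< d+2+A] @ [d+2+A+d ..< d+2+B]
      @ [0..<j] @ [Suc j..<Suc d])"
  using assms by auto

lemma Lj_props:
  assumes "j \<le> d"
  shows "distinct (Lj d j)" "set (Lj d j) = {0..<NN d}"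
proof -
  have "j * d + d \<le> Suc d * d" using assms by (simp add: mult_le_mono1 add.commute)
  then show "distinct (Lj d j)" using dist_aux[OF _ assms] unfolding Lj_def NN_def by blast
  show "set (Lj d j) = {0..<NN d}" using set_aux[OF \<open>j * d + d \<le> Suc d * d\<close> assms]
    unfolding Lj_def NN_def by (simp only: set_simps set_append set_upt Un_assoc)
qed



definition GG :: "nat \<Rightarrow> real \<Rightarrow> game" where
  "GG d t0 = (| njobs = NN d, nmach = Suc d, sp = (\<lambda>_. 1), pri = (\<lambda>j k. pos (Lj d j) k + 1),
     da = (\<lambda>k. if k \<le> d then 1 else 0),
     db = (\<lambda>k. if k \<le> Suc d then 1 else 1 / real (Suc d)),
     tau = (\<lambda>k. if k \<le> d then t0 else if k = Suc d then 1 else 1 / real (Suc d)) |)"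

lemma GG_simps [simp]: "njobs (GG d t0) = NN d" "nmach (GG d t0) = Suc d" "sp (GG d t0) j = 1"
  "pri (GG d t0) j = (\<lambda>k. pos (Lj d j) k + 1)"
  by (simp_all add: GG_def)

lemma ptime_X: "k \<le> d \<Longrightarrow> ptime (GG d t0) k t = max t0 (1 - t)"
  by (simp add: GG_def ptime_def)

lemma ptime_F: "d < k \<Longrightarrow> ptime (GG d t0) k t = db (GG d t0) k"
  by (simp add: GG_def ptime_def)

lemma db_F: "d < k \<Longrightarrow> 1 / real (Suc d) \<le> db (GG d t0) k \<and> db (GG d t0) k \<le> 1"
  by (auto simp: GG_def field_simps)

lemma db_S: "Suc d < k \<Longrightarrow> db (GG d t0) k = 1 / real (Suc d)"
  by (auto simp: GG_def)

lemma db_I: "db (GG d t0) (Suc d) = 1"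
  by (auto simp: GG_def)

lemma run_fixed: "\<forall>x\<in>set xs. d < x \<Longrightarrow>
   run (GG d t0) 1 xs t = t + sum_list (map (db (GG d t0)) xs)"
  by (induct xs arbitrary: t) (auto simp: ptime_F)

lemma ptime_pos: "0 < t0 \<Longrightarrow> 0 < ptime (GG d t0) k t"
  by (auto simp: GG_def ptime_def less_max_iff_disj)

lemma run_ge: "0 < t0 \<Longrightarrow> t \<le> run (GG d t0) 1 xs t"
proof (induct xs arbitrary: t)
  case Nil then show ?case by simp
next
  case (Cons a xs)
  have "t \<le> t + ptime (GG d t0) a t / 1" using ptime_pos[OF Cons.prems, of d a t] by simp
  also have "\<dots> \<le> run (GG d t0) 1 xs (t + ptime (GG d t0) a t / 1)" using Cons by blast
  finally show ?case by simp
qed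

lemma run_X_ge1: "0 < t0 \<Longrightarrow> x \<in> set xs \<Longrightarrow> x \<le> d \<Longrightarrow> 0 \<le> t \<Longrightarrow> 1 \<le> run (GG d t0) 1 xs t"
proof (induct xs arbitrary: t)
  case Nil then show ?case by simp
next
  case (Cons a xs)
  have np: "0 \<le> t + ptime (GG d t0) a t" using ptime_pos[OF Cons.prems(1), of d a t] Cons.prems by simp
  show ?case
  proof (cases "a = x")
    case True
    then have "1 \<le> t + ptime (GG d t0) a t" using Cons.prems by (simp add: ptime_X)
    also have "\<dots> \<le> run (GG d t0) 1 xs (t + ptime (GG d t0) a t / 1)" using run_ge[OF Cons.prems(1)] by simp
    finally show ?thesis by simp
  next
    case False
    then show ?thesis using Cons np by simp
  qed
qed

lemma run_Xs_le: "0 \<le> t0 \<Longrightarrow> \<forall>x\<in>set xs. x \<le> d \<Longrightarrow>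
  run (GG d t0) 1 xs t \<le> max t 1 + t0 * length xs"
proof (induct xs arbitrary: t)
  case Nil then show ?case by simp
next
  case (Cons a xs)
  have "run (GG d t0) 1 (a # xs) t = run (GG d t0) 1 xs (t + max t0 (1 - t))"
    using Cons.prems by (simp add: ptime_X)
  also have "\<dots> \<le> max (t + max t0 (1 - t)) 1 + t0 * length xs"
    by (intro Cons.hyps) (use Cons.prems in auto)
  also have "\<dots> \<le> max t 1 + t0 * length (a # xs)" using Cons.prems by (auto simp: algebra_simps)
  finally show ?case .
qed

lemma sum_list_ge: "\<forall>x\<in>set xs. c \<le> f x \<Longrightarrow> real (length xs) * c \<le> sum_list (map f xs)"
  by (induct xs) (auto simp: algebra_simps)

lemma sum_list_le: "\<forall>x\<in>set xs. f x \<le> c \<Longrightarrow> sum_list (map f xs) \<le> real (length xs) * c"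
  by (induct xs) (auto simp: algebra_simps)

lemma compl_GG:
  assumes "\<sigma> k \<le> d"
  shows "compl (GG d t0) \<sigma> k = run (GG d t0) 1
     (filter (\<lambda>x. \<sigma> x = \<sigma> k) (take (Suc (pos (Lj d (\<sigma> k)) k)) (Lj d (\<sigma> k)))) 0"
proof -
  let ?L = "Lj d (\<sigma> k)"
  have L: "distinct ?L" "set ?L = {0..<NN d}" using Lj_props assms by auto
  have "sort_key (\<lambda>x. pos ?L x + 1) (filter (\<lambda>x. \<sigma> x = \<sigma> k \<and> pos ?L x + 1 \<le> pos ?L k + 1) [0..<NN d])
      = filter (\<lambda>x. \<sigma> x = \<sigma> k \<and> pos ?L x + 1 \<le> pos ?L k + 1) ?L"
    by (rule sort_pos[OF L])
  also have "\<dots> = filter (\<lambda>x. \<sigma> x = \<sigma> k \<and> pos ?L x \<le> pos ?L k) ?L" by simp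
  also have "\<dots> = filter (\<lambda>x. \<sigma> x = \<sigma> k) (take (Suc (pos ?L k)) ?L)"
    by (rule filter_pos_take[OF L(1)])
  finally show ?thesis unfolding compl_def Let_def by simp
qed



lemma pos_append_in: "x \<in> set A \<Longrightarrow> pos (A @ B) x = pos A x"
  by (induct A) auto

lemma take_pos_app2: "k \<notin> set A \<Longrightarrow> take (Suc (pos (A @ B) k)) (A @ B) = A @ take (Suc (pos B k)) B"
  by (simp add: pos_append)

lemma take_pos_app1: "k \<in> set A \<Longrightarrow> take (Suc (pos (A @ B) k)) (A @ B) = take (Suc (pos A k)) A"
  using pos_less[of k A] by (simp add: pos_append_in)

lemma mem_list: "k \<in> set L \<Longrightarrow> k \<in> set (filter (\<lambda>x. \<sigma> x = \<sigma> k) (take (Suc (pos L k)) L))"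
proof -
  assume k: "k \<in> set L"
  have "take (Suc (pos L k)) L ! pos L k = k" using k by (simp add: nth_pos)
  moreover have "pos L k < length (take (Suc (pos L k)) L)" using k pos_less[OF k] by simp
  ultimately have "k \<in> set (take (Suc (pos L k)) L)" by (metis nth_mem)
  then show ?thesis by simp
qed

definition sigN :: "nat \<Rightarrow> nat \<Rightarrow> nat" where
  "sigN d k = (if k \<le> d then k else if k = Suc d then 0 else if k < NN d then (k - (d+2)) div d else 0)"

lemma sm_bound: "j \<le> d \<Longrightarrow> r < d \<Longrightarrow> j * d + r < Suc d * d"
proof -
  assume "j \<le> d" "r < d"
  then have "j * d + r < j * d + d" by simp
  also have "\<dots> = Suc j * d" by simp
  also have "\<dots> \<le> Suc d * d" using \<open>j \<le> d\<close> by (intro mult_le_mono1) simp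
  finally show ?thesis .
qed

lemma sigN_small: "j \<le> d \<Longrightarrow> r < d \<Longrightarrow> sigN d (d+2+j*d+r) = j"
  using sm_bound[of j d r] by (auto simp: sigN_def NN_def)

lemma small_decomp:
  assumes "Suc d < k" "k < NN d"
  obtains j r where "j \<le> d" "r < d" "k = d+2+j*d+r"
proof -
  let ?q = "k - (d+2)"
  have dpos: "0 < d" using assms unfolding NN_def by (cases d) auto
  have q: "?q < Suc d * d" using assms unfolding NN_def by simp
  have "?q div d < Suc d" using q dpos by (simp add: div_less_iff_less_mult)
  moreover have "?q mod d < d" using dpos by simp
  moreover have "k = d+2+(?q div d)*d + ?q mod d" using assms by simp
  ultimately show ?thesis using that by (meson less_Suc_eq_le)
qed

lemma sigN_le: "sigN d k \<le> d"
proof (cases "Suc d < k \<and> k < NN d")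
  case True
  then obtain j r where "j \<le> d" "r < d" "k = d+2+j*d+r" using small_decomp by blast
  then show ?thesis using sigN_small by simp
next
  case False then show ?thesis by (auto simp: sigN_def)
qed

abbreviation Sm :: "nat \<Rightarrow> nat \<Rightarrow> nat list" where
  "Sm d j \<equiv> [d+2+j*d ..< d+2+j*d+d]"

abbreviation FS :: "nat \<Rightarrow> nat \<Rightarrow> nat list" where
  "FS d j \<equiv> [d+2 ..< d+2+j*d] @ [d+2+j*d+d ..< NN d]"

abbreviation FX :: "nat \<Rightarrow> nat \<Rightarrow> nat list" where
  "FX d j \<equiv> [0..<j] @ [Suc j..<Suc d]"

lemma Lj_alt: "Lj d j = [j] @ Sm d j @ [Suc d] @ FS d j @ FX d j"
  by (simp add: Lj_def)

lemma sum_Sm: "sum_list (map (db (GG d t0)) (Sm d j)) = real d / real (Suc d)"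
proof -
  have "map (db (GG d t0)) (Sm d j) = map (\<lambda>_. 1 / real (Suc d)) (Sm d j)"
    by (rule map_cong) (auto simp: db_S)
  then have "sum_list (map (db (GG d t0)) (Sm d j)) = real (length (Sm d j)) * (1 / real (Suc d))"
    by (simp only: map_replicate_const sum_list_replicate)
  then show ?thesis by (simp del: upt_Suc)
qed

lemma sigN_Sm: "j \<le> d \<Longrightarrow> x \<in> set (Sm d j) \<Longrightarrow> sigN d x = j"
proof -
  assume j: "j \<le> d" and x: "x \<in> set (Sm d j)"
  then have "x = d+2+j*d+(x - (d+2+j*d))" "x - (d+2+j*d) < d" by auto
  then show ?thesis using sigN_small[OF j, of "x - (d+2+j*d)"] by metis
qed

lemma compl_I:
  assumes "j \<le> d" "0 < t0" "t0 \<le> 1"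
  shows "compl (GG d t0) ((sigN d)(Suc d := j)) (Suc d) = 2 + real d / real (Suc d)"
proof -
  let ?s = "(sigN d)(Suc d := j)"
  have sj: "?s (Suc d) = j" by simp
  have nin: "Suc d \<notin> set ([j] @ Sm d j)" using assms by auto
  have L: "Lj d j = ([j] @ Sm d j) @ ([Suc d] @ FS d j @ FX d j)" by (simp add: Lj_def)
  have tk: "take (Suc (pos (Lj d j) (Suc d))) (Lj d j) = [j] @ Sm d j @ [Suc d]"
    unfolding L by (subst take_pos_app2[OF nin]) simp
  have f: "filter (\<lambda>x. ?s x = j) ([j] @ Sm d j @ [Suc d]) = [j] @ Sm d j @ [Suc d]"
    using assms sigN_Sm[OF assms(1)] by (auto simp: sigN_def intro!: filter_True)
  have "compl (GG d t0) ?s (Suc d) = run (GG d t0) 1 ([j] @ Sm d j @ [Suc d]) 0"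
    using compl_GG[of ?s "Suc d" d t0] assms tk f by simp
  also have "\<dots> = run (GG d t0) 1 (Sm d j @ [Suc d]) 1"
    using assms by (simp add: ptime_X)
  also have "\<dots> = 1 + (real d / real (Suc d) + 1)"
  proof -
    have "run (GG d t0) 1 (Sm d j @ [Suc d]) 1 = 1 + sum_list (map (db (GG d t0)) (Sm d j @ [Suc d]))"
      by (rule run_fixed) auto
    also have "\<dots> = 1 + (real d / real (Suc d) + 1)"
      by (simp only: map_append sum_list_append sum_Sm) (simp add: db_I)
    finally show ?thesis .
  qed
  finally show ?thesis by simp
qed



declare upt_Suc[simp del]

lemma compl_X_NE:
  assumes "j \<le> d" "t0 \<le> 1"
  shows "compl (GG d t0) (sigN d) j = 1"
proof -
  have sj: "sigN d j = j" using assms by (simp add: sigN_def)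
  have tk: "take (Suc (pos (Lj d j) j)) (Lj d j) = [j]" by (simp add: Lj_def)
  have "compl (GG d t0) (sigN d) j = run (GG d t0) 1 [j] 0"
    using compl_GG[of "sigN d" j d t0] sj assms tk by simp
  also have "\<dots> = 1" using assms by (simp add: ptime_X)
  finally show ?thesis .
qed

lemma set_Lj: "j \<le> d \<Longrightarrow> x < NN d \<Longrightarrow> x \<in> set (Lj d j)"
  using Lj_props(2) by auto

lemma NN_gt: "Suc d < NN d" by (simp add: NN_def)

lemma compl_X_dev:
  assumes "j \<le> d" "j' \<le> d" "0 < t0"
  shows "1 \<le> compl (GG d t0) ((sigN d)(j := j')) j"
proof -
  let ?s = "(sigN d)(j := j')"
  have mem: "j \<in> set (Lj d j')" using set_Lj[OF assms(2)] NN_gt[of d] assms by simp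
  show ?thesis
    using compl_GG[of ?s j d t0] assms run_X_ge1[OF assms(3) mem_list[OF mem, of ?s]] by simp
qed

lemma compl_S_NE:
  assumes "j \<le> d" "r < d" "k = d+2+j*d+r" "t0 \<le> 1"
  shows "compl (GG d t0) (sigN d) k \<le> 2"
proof -
  have sk: "sigN d k = j" using sigN_small assms by simp
  have kin: "k \<in> set (Sm d j)" unfolding set_upt atLeastLessThan_iff using assms by linarith
  have nin: "k \<notin> set [j]" using assms by simp
  have L: "Lj d j = [j] @ (Sm d j @ ([Suc d] @ FS d j @ FX d j))" by (simp add: Lj_def)
  have tk: "take (Suc (pos (Lj d j) k)) (Lj d j) = [j] @ take (Suc (pos (Sm d j) k)) (Sm d j)"
    unfolding L by (simp only: take_pos_app2[OF nin] take_pos_app1[OF kin])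
  define ys where "ys = filter (\<lambda>x. sigN d x = j) (take (Suc (pos (Sm d j) k)) (Sm d j))"
  have ysS: "\<forall>x\<in>set ys. Suc d < x" unfolding ys_def by (auto dest: in_set_takeD)
  have ysl: "length ys \<le> d" unfolding ys_def
    by (rule order_trans[OF length_filter_le]) (simp del: upt_Suc)
  have "compl (GG d t0) (sigN d) k = run (GG d t0) 1 (j # ys) 0"
    using compl_GG[of "sigN d" k d t0] sk assms tk by (simp add: ys_def sigN_def)
  also have "\<dots> = run (GG d t0) 1 ys 1" using assms by (simp add: ptime_X)
  also have "\<dots> = 1 + sum_list (map (db (GG d t0)) ys)"
    by (rule run_fixed) (use ysS in auto)
  also have "\<dots> \<le> 1 + real (length ys) * (1 / real (Suc d))"
    using sum_list_le[of ys "db (GG d t0)" "1 / real (Suc d)"] ysS db_S by simp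
  also have "\<dots> \<le> 1 + real d * (1 / real (Suc d))"
    using ysl by (intro add_left_mono mult_right_mono) auto
  also have "\<dots> \<le> 2" by (simp add: field_simps)
  finally show ?thesis .
qed

lemma compl_S_dev:
  assumes "j \<le> d" "r < d" "k = d+2+j*d+r" "j' \<le> d" "j' \<noteq> j" "0 < t0" "t0 \<le> 1"
  shows "2 \<le> compl (GG d t0) ((sigN d)(k := j')) k"
proof -
  let ?s = "(sigN d)(k := j')"
  have kN: "j * d + r < Suc d * d" using sm_bound assms by simp
  have cases: "(j * d + r < j' * d) \<or> (Suc j' * d \<le> j * d)"
  proof (cases "j < j'")
    case True
    then have "Suc j * d \<le> j' * d" by (intro mult_le_mono1) simp
    then show ?thesis using assms by simp
  next
    case False
    then have "Suc j' * d \<le> j * d" using assms by (intro mult_le_mono1) simp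
    then show ?thesis by simp
  qed
  have e1: "Suc j' * d = j' * d + d" "Suc d * d = d * d + d" by simp_all
  have k3: "k = d+2+(j*d+r)" using assms by simp
  have kin: "k \<in> set (FS d j')"
    using cases
  proof
    assume "j * d + r < j' * d"
    then have "k \<in> set [d+2 ..< d+2+j'*d]" unfolding k3 by simp
    then show ?thesis by simp
  next
    assume "Suc j' * d \<le> j * d"
    then have "k \<in> set [d+2+j'*d+d ..< NN d]" unfolding k3 NN_def using kN e1 by simp
    then show ?thesis by simp
  qed
  have nin: "k \<notin> set ([j'] @ Sm d j' @ [Suc d])" using assms cases by auto
  have L: "Lj d j' = ([j'] @ Sm d j' @ [Suc d]) @ (FS d j' @ FX d j')" by (simp add: Lj_def)
  define T where "T = take (Suc (pos (FS d j') k)) (FS d j')"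
  have tk: "take (Suc (pos (Lj d j') k)) (Lj d j') = [j'] @ Sm d j' @ [Suc d] @ T"
  proof -
    have "take (Suc (pos (Lj d j') k)) (Lj d j') = ([j'] @ Sm d j' @ [Suc d]) @
       take (Suc (pos (FS d j' @ FX d j') k)) (FS d j' @ FX d j')"
      unfolding L by (rule take_pos_app2[OF nin])
    also have "take (Suc (pos (FS d j' @ FX d j') k)) (FS d j' @ FX d j') = T"
      unfolding T_def by (rule take_pos_app1[OF kin])
    finally show ?thesis by simp
  qed
  have kT: "k \<in> set T" unfolding T_def
    using mem_list[OF kin, of ?s] by simp
  define ys where "ys = filter (\<lambda>x. ?s x = j') ([Suc d] @ T)"
  have kys: "k \<in> set ys" unfolding ys_def using kT by simp
  have ysS: "\<forall>x\<in>set ys. d < x" unfolding ys_def T_def by (auto dest: in_set_takeD)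
  have ysl: "1 \<le> length ys" using kys by (cases ys) auto
  have fSm: "filter (\<lambda>x. ?s x = j') (Sm d j') = Sm d j'"
    using sigN_Sm[OF assms(4)] nin by (intro filter_True) auto
  have sj': "?s j' = j'" using assms by (simp add: sigN_def)
  have "compl (GG d t0) ?s k = run (GG d t0) 1 (j' # Sm d j' @ ys) 0"
    using compl_GG[of ?s k d t0] assms tk fSm sj' by (simp add: ys_def)
  also have "\<dots> = run (GG d t0) 1 (Sm d j' @ ys) 1" using assms by (simp add: ptime_X)
  also have "\<dots> = 1 + (real d / real (Suc d) + sum_list (map (db (GG d t0)) ys))"
  proof -
    have "run (GG d t0) 1 (Sm d j' @ ys) 1 = 1 + sum_list (map (db (GG d t0)) (Sm d j' @ ys))"
      by (rule run_fixed) (use ysS in auto)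
    then show ?thesis by (simp only: map_append sum_list_append sum_Sm)
  qed
  also have "\<dots> \<ge> 1 + (real d / real (Suc d) + real (length ys) * (1 / real (Suc d)))"
    using sum_list_ge[of ys "1 / real (Suc d)" "db (GG d t0)"] ysS db_F by simp
  moreover have "real (length ys) * (1 / real (Suc d)) \<ge> 1 * (1 / real (Suc d))"
    using ysl by (intro mult_right_mono) auto
  moreover have "real d / real (Suc d) + 1 / real (Suc d) = 1" by (simp add: field_simps)
  ultimately show ?thesis by linarith
qed



definition sigO :: "nat \<Rightarrow> nat \<Rightarrow> nat" where
  "sigO d k = (if k = 0 then 1 else if k \<le> Suc d then 0 else if k < NN d then
     (if k - (d+2) < d then k - (d+2) + 1 else (k - (d+2)) div d) else 0)"

lemma sigO_le: "1 \<le> d \<Longrightarrow> sigO d k \<le> d"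
proof -
  assume d: "1 \<le> d"
  show ?thesis
  proof (cases "Suc d < k \<and> k < NN d")
    case True
    have q: "k - (d+2) < Suc d * d" using True unfolding NN_def by arith
    have "(k - (d+2)) div d < Suc d" using q d by (simp add: div_less_iff_less_mult)
    then show ?thesis using True d unfolding sigO_def by auto
  next
    case False then show ?thesis using d by (auto simp: sigO_def)
  qed
qed

lemma sigO_set:
  assumes "Suc d < x" "x < NN d" "sigO d x = j"
  shows "1 \<le> j \<and> (x = d + 1 + j \<or> x \<in> {d+2+j*d ..< d+2+j*d+d})"
proof (cases "x - (d+2) < d")
  case True
  then show ?thesis using assms by (auto simp: sigO_def)
next
  case False
  let ?q = "x - (d+2)"
  have j: "?q div d = j" using assms False by (simp add: sigO_def)
  have dpos: "0 < d" using assms False unfolding NN_def by (cases d) auto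
  have "d div d \<le> ?q div d" using False by (intro div_le_mono) simp
  then have "1 \<le> ?q div d" using dpos by simp
  moreover have e: "?q = j * d + ?q mod d" using j by (metis div_mult_mod_eq)
  moreover have "?q mod d < d" using dpos by simp
  moreover have x: "x = d + 2 + ?q" using assms by simp
  ultimately have "d+2+j*d \<le> x \<and> x < d+2+j*d+d" by linarith
  then show ?thesis using j \<open>1 \<le> ?q div d\<close> by simp
qed

lemma compl_O:
  assumes "1 \<le> d" "0 < t0" "k < NN d"
  shows "compl (GG d t0) (sigO d) k \<le> 1 + t0 * d"
proof -
  define j where "j = sigO d k"
  have jd: "j \<le> d" using sigO_le assms unfolding j_def by simp
  define F where "F = Sm d j @ [Suc d] @ FS d j"
  have L: "Lj d j = [j] @ (F @ FX d j)" by (simp add: Lj_def F_def)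
  have dL: "distinct (Lj d j)" "set (Lj d j) = {0..<NN d}" using Lj_props jd by auto
  have dF: "distinct F" using dL(1) unfolding L by simp
  have Fset1: "\<forall>x\<in>set F. d < x" unfolding F_def by auto
  have Fset: "\<forall>x\<in>set F. d < x \<and> x < NN d" using Fset1 dL(2) unfolding L by auto
  have FXset: "\<forall>x\<in>set (FX d j). x \<le> d" using jd by auto
  have lFX: "length (FX d j) = d" using jd by simp
  have nj: "sigO d j \<noteq> j" using assms jd by (auto simp: sigO_def)
  define p where "p = pos (Lj d j) k"
  define fs where "fs = filter (\<lambda>x. sigO d x = j) (take p F)"
  define xs where "xs = filter (\<lambda>x. sigO d x = j) (take (p - length F) (FX d j))"
  have "take (Suc p) (Lj d j) = j # (take p F @ take (p - length F) (FX d j))"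
    unfolding L by simp
  then have lst: "filter (\<lambda>x. sigO d x = j) (take (Suc p) (Lj d j)) = fs @ xs"
    using nj unfolding fs_def xs_def by simp
  have fsF: "\<forall>x\<in>set fs. d < x \<and> x < NN d \<and> sigO d x = j" unfolding fs_def using Fset
    by (auto dest: in_set_takeD)
  have xsX: "\<forall>x\<in>set xs. x \<le> d" unfolding xs_def using FXset by (auto dest: in_set_takeD)
  have lxs: "length xs \<le> d"
  proof -
    have "length xs \<le> length (take (p - length F) (FX d j))" unfolding xs_def by (rule length_filter_le)
    also have "\<dots> \<le> length (FX d j)" by simp
    finally show ?thesis using lFX by simp
  qed
  have dfs: "distinct fs" unfolding fs_def using dF by (simp add: distinct_take)
  have S1: "sum_list (map (db (GG d t0)) fs) \<le> 1"
  proof (cases "j = 0")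
    case True
    have "set fs \<subseteq> {Suc d}"
    proof
      fix x assume x: "x \<in> set fs"
      show "x \<in> {Suc d}"
      proof (rule ccontr)
        assume "x \<notin> {Suc d}"
        then have "Suc d < x" using fsF x by auto
        then show False using sigO_set[of d x j] fsF x True by auto
      qed
    qed
    then have "length fs \<le> 1" using distinct_card[OF dfs] card_mono[of "{Suc d}" "set fs"] by simp
    moreover have "sum_list (map (db (GG d t0)) fs) \<le> real (length fs) * 1"
      using sum_list_le[of fs "db (GG d t0)" 1] db_F fsF by simp
    ultimately show ?thesis by simp
  next
    case False
    have sub: "set fs \<subseteq> insert (d + 1 + j) (set (Sm d j))"
    proof
      fix x assume x: "x \<in> set fs"
      have "Suc d \<noteq> x" using fsF x False by (auto simp: sigO_def)
      then have "Suc d < x" using fsF x by auto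
      then show "x \<in> insert (d + 1 + j) (set (Sm d j))" using sigO_set[of d x j] fsF x by auto
    qed
    have "length fs \<le> Suc d"
    proof -
      have "card (set fs) \<le> card (insert (d + 1 + j) (set (Sm d j)))" by (rule card_mono[OF _ sub]) simp
      also have "\<dots> \<le> Suc (card (set (Sm d j)))" by (rule card_insert_le_m1) auto
      finally show ?thesis using distinct_card[OF dfs] by simp
    qed
    moreover have "\<forall>x\<in>set fs. db (GG d t0) x = 1 / real (Suc d)"
    proof
      fix x assume x: "x \<in> set fs"
      have "Suc d \<noteq> x" using fsF x False by (auto simp: sigO_def)
      then have "Suc d < x" using fsF x by auto
      then show "db (GG d t0) x = 1 / real (Suc d)" by (rule db_S)
    qed
    then have "sum_list (map (db (GG d t0)) fs) \<le> real (length fs) * (1 / real (Suc d))"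
      using sum_list_le[of fs "db (GG d t0)" "1 / real (Suc d)"] by simp
    moreover have "real (length fs) * (1 / real (Suc d)) \<le> real (Suc d) * (1 / real (Suc d))"
      using \<open>length fs \<le> Suc d\<close> by (intro mult_right_mono) auto
    moreover have "real (Suc d) * (1 / real (Suc d)) = 1" by simp
    ultimately show ?thesis by linarith
  qed
  have "compl (GG d t0) (sigO d) k = run (GG d t0) 1 (fs @ xs) 0"
    using compl_GG[of "sigO d" k d t0] jd lst unfolding j_def p_def by simp
  also have "\<dots> = run (GG d t0) 1 xs (sum_list (map (db (GG d t0)) fs))"
    using run_fixed[of fs d t0 0] fsF by (simp add: run_append)
  also have "\<dots> \<le> max (sum_list (map (db (GG d t0)) fs)) 1 + t0 * length xs"
    using run_Xs_le xsX assms by simp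
  also have "\<dots> \<le> 1 + t0 * d" using S1 lxs assms by (simp add: max_def)
  finally show ?thesis .
qed



lemma fin_prof: "finite (profiles G)"
proof -
  let ?n = "njobs G" and ?m = "nmach G"
  have "profiles G \<subseteq> (\<lambda>f i. if i < ?n then f i else 0) ` (PiE {0..<?n} (\<lambda>_. {0..<?m}))"
  proof
    fix \<sigma> assume s: "\<sigma> \<in> profiles G"
    have "restrict \<sigma> {0..<?n} \<in> PiE {0..<?n} (\<lambda>_. {0..<?m})" using s by (auto simp: profiles_def)
    moreover have "\<sigma> = (\<lambda>i. if i < ?n then restrict \<sigma> {0..<?n} i else 0)"
      using s by (auto simp: profiles_def)
    ultimately show "\<sigma> \<in> (\<lambda>f i. if i < ?n then f i else 0) ` (PiE {0..<?n} (\<lambda>_. {0..<?m}))" by blast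
  qed
  moreover have "finite (PiE {0..<?n} (\<lambda>_. {0..<?m}))" by (intro finite_PiE) auto
  ultimately show ?thesis using finite_subset by blast
qed

lemma sigN_prof: "sigN d \<in> profiles (GG d t0)"
proof -
  have "\<forall>i<NN d. sigN d i < Suc d" using sigN_le[of d] by (simp add: le_imp_less_Suc)
  moreover have "\<forall>i. NN d \<le> i \<longrightarrow> sigN d i = 0" using NN_gt[of d] by (auto simp: sigN_def)
  ultimately show ?thesis by (simp add: profiles_def)
qed

lemma sigO_prof: "1 \<le> d \<Longrightarrow> sigO d \<in> profiles (GG d t0)"
  using sigO_le[of d] NN_gt[of d] by (auto simp: profiles_def sigO_def less_Suc_eq_le)

lemma NE:
  assumes "1 \<le> d" "0 < t0" "t0 \<le> 1"
  shows "is_NE (GG d t0) (sigN d)"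
  unfolding is_NE_def
proof (intro conjI allI impI)
  show "sigN d \<in> profiles (GG d t0)" by (rule sigN_prof)
  fix i j' assume i: "i < njobs (GG d t0)" and j': "j' < nmach (GG d t0)"
  then have i': "i < NN d" and j'': "j' \<le> d" by auto
  show "compl (GG d t0) (sigN d) i \<le> compl (GG d t0) ((sigN d)(i := j')) i"
  proof (cases "i \<le> d")
    case True
    then show ?thesis using compl_X_NE[OF True assms(3)] compl_X_dev[OF True j'' assms(2)] by simp
  next
    case False
    show ?thesis
    proof (cases "i = Suc d")
      case True
      have "(sigN d)(Suc d := 0) = sigN d" by (auto simp: sigN_def)
      then have "compl (GG d t0) (sigN d) i = 2 + real d / real (Suc d)"
        using compl_I[of 0 d t0] assms True by simp
      then show ?thesis using compl_I[OF j'' assms(2,3)] True by simp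
    next
      case False2: False
      then obtain j r where jr: "j \<le> d" "r < d" "i = d+2+j*d+r"
        using small_decomp[of d i] False i' by auto
      show ?thesis
      proof (cases "j' = j")
        case True
        then have "(sigN d)(i := j') = sigN d" using sigN_small jr by auto
        then show ?thesis by simp
      next
        case False
        then show ?thesis using compl_S_NE[OF jr assms(3)] compl_S_dev[OF jr j'' False assms(2,3)]
          by simp
      qed
    qed
  qed
qed

lemma valid: "0 < t0 \<Longrightarrow> valid_game (GG d t0)"
proof -
  assume t: "0 < t0"
  have a: "1 \<le> njobs (GG d t0)" using NN_gt[of d] by simp
  have b: "\<forall>j<nmach (GG d t0). 0 < sp (GG d t0) j \<and>
     bij_betw (pri (GG d t0) j) {0..<njobs (GG d t0)} {1..njobs (GG d t0)}"
  proof (intro allI impI)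
    fix j assume "j < nmach (GG d t0)"
    then have "j \<le> d" by simp
    then show "0 < sp (GG d t0) j \<and> bij_betw (pri (GG d t0) j) {0..<njobs (GG d t0)} {1..njobs (GG d t0)}"
      using bij_pos[OF Lj_props] by simp
  qed
  have c: "\<forall>i<njobs (GG d t0). 0 \<le> da (GG d t0) i \<and> 0 \<le> db (GG d t0) i \<and> 0 < tau (GG d t0) i"
    using t by (simp add: GG_def)
  show ?thesis unfolding valid_game_def using a b c by simp
qed

theorem theorem13:
  fixes \<epsilon> :: real and m :: nat
  assumes "0 < \<epsilon>" and "\<epsilon> < 1" and "m \<ge> 2"
  shows "\<exists>G \<sigma>. valid_game G \<and> nmach G = m \<and> (\<forall>j<m. sp G j = 1) \<and>
           (\<forall>i<njobs G. da G i \<le> 1) \<and>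
           is_NE G \<sigma> \<and> makespan G \<sigma> \<ge> (3 - 1 / real m - \<epsilon>) * OPT G"
proof -
  obtain d where m: "m = Suc d" and d: "1 \<le> d" using assms(3) by (cases m) auto
  define t0 where "t0 = \<epsilon> / (3 * real m)"
  have t0p: "0 < t0" using assms unfolding t0_def by simp
  have t01: "t0 \<le> 1"
  proof -
    have "1 \<le> 3 * real m" using assms by simp
    then have "\<epsilon> \<le> 3 * real m" using assms by linarith
    moreover have "0 < 3 * real m" using assms by simp
    ultimately show ?thesis unfolding t0_def by (simp add: divide_le_eq)
  qed
  let ?G = "GG d t0"
  have mk1: "2 + real d / real (Suc d) \<le> makespan ?G (sigN d)"
  proof -
    have "compl ?G (sigN d) (Suc d) = 2 + real d / real (Suc d)"
    proof -
      have "(sigN d)(Suc d := 0) = sigN d" by (auto simp: sigN_def)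
      then show ?thesis using compl_I[of 0 d t0] t0p t01 by simp
    qed
    moreover have "compl ?G (sigN d) (Suc d) \<le> makespan ?G (sigN d)"
      unfolding makespan_def using NN_gt[of d] by (intro Max_ge) auto
    ultimately show ?thesis by simp
  qed
  have opt: "OPT ?G \<le> 1 + t0 * d"
  proof -
    have "OPT ?G \<le> makespan ?G (sigO d)"
      unfolding OPT_def using fin_prof sigO_prof[OF d] by (intro Min_le) auto
    also have "\<dots> \<le> 1 + t0 * d"
      unfolding makespan_def using NN_gt[of d] compl_O[OF d t0p]
      by (subst Max_le_iff) auto
    finally show ?thesis .
  qed
  have c: "3 - 1 / real m = 2 + real d / real (Suc d)" unfolding m by (simp add: field_simps)
  have "1 / real m \<le> 1" using assms by simp
  then have cpos: "0 \<le> 3 - 1 / real m - \<epsilon>" using assms by linarith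
  have "0 \<le> 1 / real m" by simp
  then have c3: "3 - 1 / real m - \<epsilon> \<le> 3" using assms by linarith
  have u: "t0 * d \<le> \<epsilon> / 3" unfolding t0_def m using assms by (simp add: field_simps)
  have u0: "0 \<le> t0 * d" using t0p by simp
  have "(3 - 1 / real m - \<epsilon>) * OPT ?G \<le> (3 - 1 / real m - \<epsilon>) * (1 + t0 * d)"
    using opt cpos by (rule mult_left_mono)
  also have "\<dots> = (3 - 1 / real m - \<epsilon>) + (3 - 1 / real m - \<epsilon>) * (t0 * d)" by (simp add: algebra_simps)
  also have "\<dots> \<le> (3 - 1 / real m - \<epsilon>) + 3 * (t0 * d)"
    using c3 u0 by (intro add_left_mono mult_right_mono)
  also have "\<dots> \<le> 3 - 1 / real m" using u by simp
  also have "\<dots> \<le> makespan ?G (sigN d)" using mk1 c by simp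
  finally have fin: "(3 - 1 / real m - \<epsilon>) * OPT ?G \<le> makespan ?G (sigN d)" .
  show ?thesis
  proof (intro exI conjI allI impI)
    show "valid_game ?G" by (rule valid[OF t0p])
    show "nmach ?G = m" using m by simp
    show "\<And>j. j < m \<Longrightarrow> sp ?G j = 1" by simp
    show "\<And>i. i < njobs ?G \<Longrightarrow> da ?G i \<le> 1" by (simp add: GG_def)
    show "is_NE ?G (sigN d)" by (rule NE[OF d t0p t01])
    show "(3 - 1 / real m - \<epsilon>) * OPT ?G \<le> makespan ?G (sigN d)" by (rule fin)
  qed
qed


end
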